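(* Let $n>k\ge 1$ be integers, not both even, with $n=Mk$ for a positive integer $M$. Let $\alpha=\lceil n/2\rceil-\lfloor (n-k)/2\rfloor$, $\beta=k-\alpha$, and $G=\sqrt{n/k}\,W_n^H\Sigma W_k$. Let $i_0\in\{1,\dots,M\}$ and let $G_k$ be the $k\times k$ submatrix of $G$ consisting of rows $i_0,i_0+M,i_0+2M,\dots,i_0+(k-1)M$. Then $\det(G_kG_k^H)=1$, and the systematic DFT frame $G_{\mathrm{sys}}=GG_k^{-1}$ is tight.
   Context: For a positive integer $l$, $W_l$ denotes the unitary $l\times l$ DFT matrix, $(W_l)_{r,s}=\frac{1}{\sqrt l}e^{-j2\pi(r-1)(s-1)/l}$, and $^H$ denotes conjugate transpose. $\Sigma$ is the $n\times k$ matrix $\begin{pmatrix} I_\alpha & 0\\ 0 & 0\\ 0 & I_\beta\end{pmatrix}$: its first $\alpha$ rows are $(I_\alpha\ 0)$, its last $\beta$ rows are $(0\ I_\beta)$, and its middle $n-k$ rows are zero. A frame with $n\times k$ analysis operator $F$ is tight if $F^HF=cI_k$ for some $c>0$. *)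

theory Defs
  imports "HOL-Analysis.Analysis" "Jordan_Normal_Form.Schur_Decomposition"
    "Jordan_Normal_Form.Gauss_Jordan_Elimination"
begin

text \<open>Unitary l x l DFT matrix, 0-based indices: entry (r,s) corresponds to (r+1,s+1) of the paper.\<close>
definition DFT :: "nat \<Rightarrow> complex mat" where
  "DFT l = mat l l (\<lambda>(r, s). complex_of_real (1 / sqrt (real l)) *
       exp (- \<i> * complex_of_real (2 * pi * real r * real s / real l)))"

text \<open>The n x k matrix Sigma: identity block I_alpha in the top-left, I_beta in the bottom-right,
  zero middle rows (beta = k - alpha).\<close>
definition Sigma :: "nat \<Rightarrow> nat \<Rightarrow> nat \<Rightarrow> complex mat" where
  "Sigma n k \<alpha> = mat n k (\<lambda>(i, j).
      if i < \<alpha> \<and> j = i then 1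
      else if n - (k - \<alpha>) \<le> i \<and> \<alpha> \<le> j \<and> i - (n - (k - \<alpha>)) = j - \<alpha> then 1
      else 0)"

definition alpha_par :: "nat \<Rightarrow> nat \<Rightarrow> nat" where
  "alpha_par n k = nat (\<lceil>real n / 2\<rceil> - \<lfloor>(real n - real k) / 2\<rfloor>)"

definition dft_frame :: "nat \<Rightarrow> nat \<Rightarrow> complex mat" where
  "dft_frame n k = complex_of_real (sqrt (real n / real k)) \<cdot>\<^sub>m
      (mat_adjoint (DFT n) * Sigma n k (alpha_par n k) * DFT k)"

text \<open>k x k submatrix of G with rows i0, i0+M, ..., i0+(k-1)M (1-based i0).\<close>
definition row_sub :: "complex mat \<Rightarrow> nat \<Rightarrow> nat \<Rightarrow> nat \<Rightarrow> complex mat" where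
  "row_sub G k M i0 = mat k (dim_col G) (\<lambda>(r, c). G $$ ((i0 - 1) + r * M, c))"

definition tight_frame :: "complex mat \<Rightarrow> bool" where
  "tight_frame F \<longleftrightarrow> (\<exists>c::real. c > 0 \<and> mat_adjoint F * F = complex_of_real c \<cdot>\<^sub>m 1\<^sub>m (dim_col F))"

end

theory Submission
  imports Defs
begin

definition zeta :: "nat \<Rightarrow> complex" where
  "zeta l = exp (2 * of_real pi * \<i> / of_nat l)"

lemma zeta_cnj_mult: "cnj (zeta l) * zeta l = 1"
proof -
  have "cnj (zeta l) * zeta l = exp (cnj (2 * of_real pi * \<i> / of_nat l) + 2 * of_real pi * \<i> / of_nat l)"
    unfolding zeta_def by (simp add: exp_cnj flip: exp_add)
  also have "cnj (2 * of_real pi * \<i> / of_nat l) + 2 * of_real pi * \<i> / of_nat l = 0"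
    by (simp add: complex_eq_iff)
  finally show ?thesis by simp
qed

lemma zeta_pow_cnj_mult: "cnj (zeta l ^ p) * zeta l ^ p = 1"
  by (metis complex_cnj_power power_mult_distrib power_one zeta_cnj_mult)

lemma zeta_pow_exp: "zeta l ^ j = exp (2 * of_real pi * \<i> * of_nat j / of_nat l)"
proof -
  have "zeta l ^ j = exp (of_nat j * (2 * of_real pi * \<i> / of_nat l))"
    unfolding zeta_def by (simp only: exp_of_nat_mult)
  thus ?thesis by (simp add: field_simps)
qed

lemma zeta_pow_eq: "1 \<le> l \<Longrightarrow> zeta l ^ a = zeta l ^ b \<longleftrightarrow> a mod l = b mod l"
  unfolding zeta_pow_exp by (rule complex_root_unity_eq)

lemma zeta_pow_l: "1 \<le> l \<Longrightarrow> zeta l ^ l = 1"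
  using zeta_pow_eq[of l l 0] by simp

lemma zeta_orth:
  assumes l: "1 \<le> l" and a: "a < l" and b: "b < l"
  shows "(\<Sum>j<l. zeta l ^ (j * a) * cnj (zeta l ^ (j * b))) = (if a = b then of_nat l else 0)"
proof -
  define z where "z = zeta l"
  define w where "w = z ^ a * cnj z ^ b"
  have cz: "cnj z * z = 1" unfolding z_def by (rule zeta_cnj_mult)
  have cz': "cnj z ^ b * z ^ b = 1" using cz by (metis power_mult_distrib power_one)
  have trm: "z ^ (j * a) * cnj (z ^ (j * b)) = w ^ j" for j
    unfolding w_def by (simp add: power_mult_distrib power_mult mult.commute)
  have wl: "w ^ l = 1"
  proof -
    have "w ^ l = (z ^ l) ^ a * cnj (z ^ l) ^ b"
      unfolding w_def by (simp add: power_mult_distrib power_mult[symmetric] mult.commute)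
    thus ?thesis using zeta_pow_l[OF l] z_def by simp
  qed
  have w1: "w = 1 \<longleftrightarrow> a = b"
  proof
    assume "w = 1"
    hence "z ^ a * (cnj z ^ b * z ^ b) = z ^ b" unfolding w_def by (metis mult.assoc mult_1)
    hence "z ^ a = z ^ b" using cz' by simp
    thus "a = b" using zeta_pow_eq[OF l] a b z_def by simp
  next
    assume "a = b" thus "w = 1" unfolding w_def using cz' by (simp add: mult.commute)
  qed
  have "(\<Sum>j<l. z ^ (j * a) * cnj (z ^ (j * b))) = (\<Sum>j<l. w ^ j)" using trm by simp
  also have "\<dots> = (if a = b then of_nat l else 0)"
    using w1 wl by (simp add: sum_gp_strict)
  finally show ?thesis unfolding z_def .
qed

lemma DFT_entry: "r < l \<Longrightarrow> s < l \<Longrightarrow> DFT l $$ (r, s) = of_real (1 / sqrt (real l)) * cnj (zeta l ^ (r * s))"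
proof -
  assume "r < l" "s < l"
  hence "DFT l $$ (r, s) = of_real (1 / sqrt (real l)) *
       exp (- \<i> * complex_of_real (2 * pi * real r * real s / real l))" unfolding DFT_def by simp
  also have "- \<i> * complex_of_real (2 * pi * real r * real s / real l) = cnj (2 * of_real pi * \<i> * of_nat (r * s) / of_nat l)"
    by (simp add: complex_eq_iff)
  finally show ?thesis by (simp add: zeta_pow_exp exp_cnj)
qed

lemma DFT_carrier: "DFT l \<in> carrier_mat l l" unfolding DFT_def by simp

lemma adj_dims[simp]: "dim_row (mat_adjoint A) = dim_col A" "dim_col (mat_adjoint A) = dim_row A"
  unfolding mat_adjoint_def by simp_all

lemma adj_carrier: "A \<in> carrier_mat r c \<Longrightarrow> mat_adjoint A \<in> carrier_mat c r"
  unfolding carrier_mat_def by simp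

lemma adj_index[simp]: "i < dim_col A \<Longrightarrow> j < dim_row A \<Longrightarrow> mat_adjoint A $$ (i, j) = conjugate (A $$ (j, i))"
  unfolding mat_adjoint_def by (simp add: mat_of_rows_index)

lemma adj_mult: assumes A: "A \<in> carrier_mat r m" and B: "B \<in> carrier_mat m c"
  shows "mat_adjoint ((A :: complex mat) * B) = mat_adjoint B * mat_adjoint A"
proof (rule eq_matI)
  fix i j assume i: "i < dim_row (mat_adjoint B * mat_adjoint A)" and j: "j < dim_col (mat_adjoint B * mat_adjoint A)"
  hence i': "i < c" and j': "j < r" using A B by simp_all
  show "mat_adjoint (A * B) $$ (i, j) = (mat_adjoint B * mat_adjoint A) $$ (i, j)"
    using A B i' j' by (simp add: scalar_prod_def sum_distrib_left mult.commute)
qed (use A B in simp_all)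

lemma adj_smult: "mat_adjoint (a \<cdot>\<^sub>m (A :: complex mat)) = cnj a \<cdot>\<^sub>m mat_adjoint A"
  by (rule eq_matI) simp_all

definition tau :: "nat \<Rightarrow> nat \<Rightarrow> nat \<Rightarrow> nat \<Rightarrow> nat" where
  "tau n k a c = (if c < a then c else n - k + c)"

lemma tau_lt: "k \<le> n \<Longrightarrow> c < k \<Longrightarrow> tau n k a c < n"
  unfolding tau_def by auto

lemma Sigma_entry: assumes "a \<le> k" "k \<le> n" "i < n" "c < k"
  shows "Sigma n k a $$ (i, c) = (if i = tau n k a c then 1 else 0)"
  using assms unfolding Sigma_def tau_def by auto

lemma Sigma_carrier: "Sigma n k a \<in> carrier_mat n k"
  unfolding Sigma_def by simp

lemma F_entry: assumes "a \<le> k" "k \<le> n" "r < n" "c < k"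
  shows "(mat_adjoint (DFT n) * Sigma n k a) $$ (r, c) = of_real (1 / sqrt (real n)) * zeta n ^ (tau n k a c * r)"
proof -
  have dn: "dim_row (DFT n) = n" "dim_col (DFT n) = n" unfolding DFT_def by simp_all
  have ds: "dim_row (Sigma n k a) = n" "dim_col (Sigma n k a) = k" unfolding Sigma_def by simp_all
  have "(mat_adjoint (DFT n) * Sigma n k a) $$ (r, c) = (\<Sum>i<n. mat_adjoint (DFT n) $$ (r, i) * Sigma n k a $$ (i, c))"
    using assms dn ds by (simp add: scalar_prod_def lessThan_atLeast0)
  also have "\<dots> = (\<Sum>i<n. if i = tau n k a c then of_real (1 / sqrt (real n)) * zeta n ^ (i * r) else 0)"
    using assms dn by (intro sum.cong) (simp_all add: Sigma_entry DFT_entry)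
  also have "\<dots> = of_real (1 / sqrt (real n)) * zeta n ^ (tau n k a c * r)"
    using tau_lt[OF assms(2,4)] by simp
  finally show ?thesis .
qed

lemma sqrt_inv_sq: "0 < l \<Longrightarrow> complex_of_real (1 / sqrt (real l)) * complex_of_real (1 / sqrt (real l)) = 1 / of_nat l"
proof -
  assume l: "0 < l"
  have "(1 / sqrt (real l)) * (1 / sqrt (real l)) = 1 / real l" using l
    by (simp add: real_sqrt_mult[symmetric])
  have "complex_of_real (1 / sqrt (real l)) * complex_of_real (1 / sqrt (real l)) = complex_of_real ((1 / sqrt (real l)) * (1 / sqrt (real l)))"
    by (simp only: of_real_mult)
  also have "\<dots> = complex_of_real (1 / real l)" using \<open>_ = 1 / real l\<close> by (rule arg_cong)
  also have "\<dots> = 1 / of_nat l" by simp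
  finally show ?thesis .
qed

lemma DFT_unitary: assumes l: "1 \<le> l"
  shows "mat_adjoint (DFT l) * DFT l = 1\<^sub>m l" "DFT l * mat_adjoint (DFT l) = 1\<^sub>m l"
proof -
  have d: "dim_row (DFT l) = l" "dim_col (DFT l) = l" unfolding DFT_def by simp_all
  have s: "complex_of_real (1 / sqrt (real l)) * complex_of_real (1 / sqrt (real l)) * of_nat l = 1"
    using sqrt_inv_sq[of l] l by simp
  show "mat_adjoint (DFT l) * DFT l = 1\<^sub>m l"
  proof (rule eq_matI)
    fix i j assume "i < dim_row (1\<^sub>m l)" "j < dim_col (1\<^sub>m l)"
    hence i: "i < l" and j: "j < l" by simp_all
    have "(mat_adjoint (DFT l) * DFT l) $$ (i, j) = (\<Sum>r<l. mat_adjoint (DFT l) $$ (i, r) * DFT l $$ (r, j))"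
      using i j d by (simp add: scalar_prod_def lessThan_atLeast0)
    also have "\<dots> = (\<Sum>r<l. (complex_of_real (1 / sqrt (real l)) * complex_of_real (1 / sqrt (real l))) * (zeta l ^ (r * i) * cnj (zeta l ^ (r * j))))"
      using i j d by (intro sum.cong) (simp_all add: DFT_entry mult.commute mult.left_commute)
    also have "\<dots> = (complex_of_real (1 / sqrt (real l)) * complex_of_real (1 / sqrt (real l))) * (if i = j then of_nat l else 0)"
      by (simp only: sum_distrib_left[symmetric] zeta_orth[OF l i j])
    also have "\<dots> = 1\<^sub>m l $$ (i, j)" using i j s by simp
    finally show "(mat_adjoint (DFT l) * DFT l) $$ (i, j) = 1\<^sub>m l $$ (i, j)" .
  qed (simp_all add: d)
  show "DFT l * mat_adjoint (DFT l) = 1\<^sub>m l"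
  proof (rule eq_matI)
    fix i j assume "i < dim_row (1\<^sub>m l)" "j < dim_col (1\<^sub>m l)"
    hence i: "i < l" and j: "j < l" by simp_all
    have "(DFT l * mat_adjoint (DFT l)) $$ (i, j) = (\<Sum>r<l. DFT l $$ (i, r) * mat_adjoint (DFT l) $$ (r, j))"
      using i j d by (simp add: scalar_prod_def lessThan_atLeast0)
    also have "\<dots> = (\<Sum>r<l. (complex_of_real (1 / sqrt (real l)) * complex_of_real (1 / sqrt (real l))) * (zeta l ^ (r * j) * cnj (zeta l ^ (r * i))))"
      using i j d by (intro sum.cong) (simp_all add: DFT_entry mult.commute mult.left_commute)
    also have "\<dots> = (complex_of_real (1 / sqrt (real l)) * complex_of_real (1 / sqrt (real l))) * (if j = i then of_nat l else 0)"
      by (simp only: sum_distrib_left[symmetric] zeta_orth[OF l j i])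
    also have "\<dots> = 1\<^sub>m l $$ (i, j)" using i j s by auto
    finally show "(DFT l * mat_adjoint (DFT l)) $$ (i, j) = 1\<^sub>m l $$ (i, j)" .
  qed (simp_all add: d)
qed

lemma adj_adj: "mat_adjoint (mat_adjoint (A :: complex mat)) = A"
  by (rule eq_matI) simp_all

lemma tau_inj: assumes "a \<le> k" "k \<le> n" "c < k" "c' < k"
  shows "tau n k a c = tau n k a c' \<longleftrightarrow> c = c'"
  using assms unfolding tau_def by auto

lemma zeta_M: assumes "0 < M" "0 < k" shows "zeta (M * k) ^ M = zeta k"
proof -
  have "zeta (M * k) ^ M = exp (2 * of_real pi * \<i> * of_nat M / of_nat (M * k))" by (rule zeta_pow_exp)
  also have "2 * of_real pi * \<i> * of_nat M / of_nat (M * k) = (2 * of_real pi * \<i> / of_nat k :: complex)"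
    using assms by (simp add: field_simps)
  finally show ?thesis unfolding zeta_def .
qed

lemma tau_pow: assumes "0 < M" "0 < k" "n = M * k" "a \<le> k"
  shows "zeta k ^ (tau n k a c * m) = zeta k ^ (c * m)"
proof (cases "c < a")
  case True thus ?thesis unfolding tau_def by simp
next
  case False
  have "n - k + c = (M - 1) * k + c" using assms by (simp add: diff_mult_distrib)
  hence "tau n k a c * m = k * ((M - 1) * m) + c * m" using False unfolding tau_def by (simp add: algebra_simps)
  hence "(tau n k a c * m) mod k = (c * m) mod k" by simp
  thus ?thesis using zeta_pow_eq[of k] assms by simp
qed

lemma FhF: assumes "1 \<le> n" "a \<le> k" "k \<le> n"
  shows "mat_adjoint (mat_adjoint (DFT n) * Sigma n k a) * (mat_adjoint (DFT n) * Sigma n k a) = 1\<^sub>m k"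
    (is "mat_adjoint ?F * ?F = _")
proof -
  have dn: "dim_row (DFT n) = n" "dim_col (DFT n) = n" unfolding DFT_def by simp_all
  have ds: "dim_row (Sigma n k a) = n" "dim_col (Sigma n k a) = k" unfolding Sigma_def by simp_all
  have s: "complex_of_real (1 / sqrt (real n)) * complex_of_real (1 / sqrt (real n)) * of_nat n = 1"
    using sqrt_inv_sq[of n] assms by simp
  show ?thesis
  proof (rule eq_matI)
    fix i j assume "i < dim_row (1\<^sub>m k)" "j < dim_col (1\<^sub>m k)"
    hence i: "i < k" and j: "j < k" by simp_all
    have ti: "tau n k a i < n" and tj: "tau n k a j < n" using tau_lt assms i j by auto
    have "(mat_adjoint ?F * ?F) $$ (i, j) = (\<Sum>r<n. mat_adjoint ?F $$ (i, r) * ?F $$ (r, j))"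
      using i j dn ds by (simp add: scalar_prod_def lessThan_atLeast0)
    also have "\<dots> = (\<Sum>r<n. (complex_of_real (1 / sqrt (real n)) * complex_of_real (1 / sqrt (real n))) * (zeta n ^ (r * tau n k a j) * cnj (zeta n ^ (r * tau n k a i))))"
      using i j dn ds assms by (intro sum.cong) (simp_all del: index_mult_mat add: index_mult_mat(2,3) F_entry mult.commute mult.left_commute)
    also have "\<dots> = (complex_of_real (1 / sqrt (real n)) * complex_of_real (1 / sqrt (real n))) * (if tau n k a j = tau n k a i then of_nat n else 0)"
      by (simp only: sum_distrib_left[symmetric] zeta_orth[OF assms(1) tj ti])
    also have "\<dots> = 1\<^sub>m k $$ (i, j)" using i j s tau_inj[OF assms(2,3) j i] by auto
    finally show "(mat_adjoint ?F * ?F) $$ (i, j) = 1\<^sub>m k $$ (i, j)" .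
  qed (simp_all add: dn ds)
qed

lemma FFh: assumes "1 \<le> n" "a \<le> k" "k \<le> n" "r < n" "r' < n"
  shows "(mat_adjoint (DFT n) * Sigma n k a * mat_adjoint (mat_adjoint (DFT n) * Sigma n k a)) $$ (r, r')
     = (complex_of_real (1 / sqrt (real n)) * complex_of_real (1 / sqrt (real n))) *
       (\<Sum>c<k. zeta n ^ (tau n k a c * r) * cnj (zeta n ^ (tau n k a c * r')))"
    (is "(?F * mat_adjoint ?F) $$ _ = _")
proof -
  have dn: "dim_row (DFT n) = n" "dim_col (DFT n) = n" unfolding DFT_def by simp_all
  have ds: "dim_row (Sigma n k a) = n" "dim_col (Sigma n k a) = k" unfolding Sigma_def by simp_all
  have "(?F * mat_adjoint ?F) $$ (r, r') = (\<Sum>c<k. ?F $$ (r, c) * mat_adjoint ?F $$ (c, r'))"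
    using assms dn ds by (simp add: scalar_prod_def lessThan_atLeast0)
  also have "\<dots> = (\<Sum>c<k. (complex_of_real (1 / sqrt (real n)) * complex_of_real (1 / sqrt (real n))) * (zeta n ^ (tau n k a c * r) * cnj (zeta n ^ (tau n k a c * r'))))"
    using dn ds assms by (intro sum.cong) (simp_all del: index_mult_mat add: index_mult_mat(2,3) F_entry mult.commute mult.left_commute)
  finally show ?thesis by (simp only: sum_distrib_left[symmetric])
qed

lemma key_sum: assumes "0 < M" "0 < k" "n = M * k" "a \<le> k" "m < k" "m' < k"
  shows "(\<Sum>c<k. zeta n ^ (tau n k a c * (i + m * M)) * cnj (zeta n ^ (tau n k a c * (i + m' * M))))
     = (if m = m' then of_nat k else 0)"
proof -
  have e: "zeta n ^ (tau n k a c * (i + q * M)) = zeta n ^ (tau n k a c * i) * zeta k ^ (c * q)" for c q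
  proof -
    have "zeta n ^ (tau n k a c * (i + q * M)) = zeta n ^ (tau n k a c * i) * (zeta n ^ M) ^ (tau n k a c * q)"
      by (simp add: algebra_simps power_add power_mult[symmetric])
    also have "zeta n ^ M = zeta k" using zeta_M assms by simp
    finally show ?thesis using tau_pow[OF assms(1-4)] by simp
  qed
  have "(\<Sum>c<k. zeta n ^ (tau n k a c * (i + m * M)) * cnj (zeta n ^ (tau n k a c * (i + m' * M))))
      = (\<Sum>c<k. zeta k ^ (c * m) * cnj (zeta k ^ (c * m')))"
  proof (intro sum.cong refl)
    fix c
    have "zeta n ^ (tau n k a c * (i + m * M)) * cnj (zeta n ^ (tau n k a c * (i + m' * M)))
       = (cnj (zeta n ^ (tau n k a c * i)) * zeta n ^ (tau n k a c * i)) * (zeta k ^ (c * m) * cnj (zeta k ^ (c * m')))"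
      unfolding e by (simp add: mult_ac)
    thus "zeta n ^ (tau n k a c * (i + m * M)) * cnj (zeta n ^ (tau n k a c * (i + m' * M))) = zeta k ^ (c * m) * cnj (zeta k ^ (c * m'))"
      by (simp only: zeta_pow_cnj_mult mult_1)
  qed
  also have "\<dots> = (if m = m' then of_nat k else 0)"
    using zeta_orth[of k m m'] assms by (simp add: mult.commute)
  finally show ?thesis .
qed

lemma smult_smult_m: "a \<cdot>\<^sub>m (b \<cdot>\<^sub>m A) = (a * b :: complex) \<cdot>\<^sub>m A"
  by (rule eq_matI) simp_all

lemma alpha_le: assumes "1 \<le> k" "k \<le> n" shows "alpha_par n k \<le> k"
proof -
  define C where "C = \<lceil>real n / 2\<rceil>"
  define D where "D = \<lfloor>(real n - real k) / 2\<rfloor>"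
  have c1: "real_of_int C < real n / 2 + 1" unfolding C_def by linarith
  have c2: "(real n - real k) / 2 < real_of_int D + 1" unfolding D_def by linarith
  have "real_of_int (2 * C) < real_of_int (int n + 2)" using c1 by simp
  hence i1: "2 * C < int n + 2" by (simp only: of_int_less_iff)
  have "real_of_int (int n - int k) < real_of_int (2 * D + 2)" using c2 by simp
  hence i2: "int n - int k < 2 * D + 2" by (simp only: of_int_less_iff)
  have "C - D \<le> int k" using i1 i2 assms by presburger
  thus ?thesis unfolding alpha_par_def C_def D_def by simp
qed

theorem mainTheorem5:
  fixes n k M i0 :: nat
  assumes "1 \<le> k" and "k < n" and "\<not> (even n \<and> even k)"
    and "0 < M" and "n = M * k"
    and "1 \<le> i0" and "i0 \<le> M"
  shows "det (row_sub (dft_frame n k) k M i0 * mat_adjoint (row_sub (dft_frame n k) k M i0)) = 1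
    \<and> tight_frame (dft_frame n k * the (mat_inverse (row_sub (dft_frame n k) k M i0)))"
proof -
  define a where "a = alpha_par n k"
  have ak: "a \<le> k" unfolding a_def using alpha_le assms by simp
  have kn: "k \<le> n" and n1: "1 \<le> n" and k0: "0 < k" using assms by simp_all
  define F where "F = mat_adjoint (DFT n) * Sigma n k a"
  define B where "B = DFT k"
  define c where "c = complex_of_real (sqrt (real n / real k))"
  define G where "G = dft_frame n k"
  have GF: "G = c \<cdot>\<^sub>m (F * B)" unfolding G_def dft_frame_def F_def B_def c_def a_def by simp
  have Fc: "F \<in> carrier_mat n k" unfolding F_def
    using adj_carrier[OF DFT_carrier] Sigma_carrier by (rule mult_carrier_mat)
  have Bc: "B \<in> carrier_mat k k" unfolding B_def by (rule DFT_carrier)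
  have Fhc: "mat_adjoint F \<in> carrier_mat k n" using Fc by (rule adj_carrier)
  have Bhc: "mat_adjoint B \<in> carrier_mat k k" using Bc by (rule adj_carrier)
  have FBc: "F * B \<in> carrier_mat n k" using Fc Bc by (rule mult_carrier_mat)
  have BFc: "mat_adjoint B * mat_adjoint F \<in> carrier_mat k n" using Bhc Fhc by (rule mult_carrier_mat)
  have Gc: "G \<in> carrier_mat n k" unfolding GF using FBc by simp
  have Ghc: "mat_adjoint G \<in> carrier_mat k n" using Gc by (rule adj_carrier)
  have sq: "complex_of_real (sqrt (real n / real k)) * complex_of_real (sqrt (real n / real k)) = complex_of_real (real n / real k)"
  proof -
    have "complex_of_real (sqrt (real n / real k)) * complex_of_real (sqrt (real n / real k)) = complex_of_real (sqrt (real n / real k) * sqrt (real n / real k))"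
      by (simp only: of_real_mult)
    also have "sqrt (real n / real k) * sqrt (real n / real k) = real n / real k" by simp
    finally show ?thesis .
  qed
  have cc1: "cnj c * c = complex_of_real (real n / real k)" unfolding c_def using sq by simp
  have cc2: "c * cnj c = complex_of_real (real n / real k)" using cc1 by (simp add: mult.commute)
  have Gh: "mat_adjoint G = cnj c \<cdot>\<^sub>m (mat_adjoint B * mat_adjoint F)"
    unfolding GF adj_smult adj_mult[OF Fc Bc] ..
  have FhF1: "mat_adjoint F * F = 1\<^sub>m k" unfolding F_def using FhF[OF n1 ak kn] .
  have BB: "mat_adjoint B * B = 1\<^sub>m k" "B * mat_adjoint B = 1\<^sub>m k" unfolding B_def using DFT_unitary[of k] assms by simp_all
  have GhG: "mat_adjoint G * G = complex_of_real (real n / real k) \<cdot>\<^sub>m 1\<^sub>m k"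
  proof -
    have e0: "mat_adjoint G * G = (cnj c \<cdot>\<^sub>m (mat_adjoint B * mat_adjoint F)) * (c \<cdot>\<^sub>m (F * B))"
      by (simp only: Gh, simp only: GF)
    have "mat_adjoint G * G = cnj c \<cdot>\<^sub>m ((mat_adjoint B * mat_adjoint F) * (c \<cdot>\<^sub>m (F * B)))"
      unfolding e0 by (rule mult_smult_assoc_mat[OF BFc smult_carrier_mat[OF FBc]])
    also have "(mat_adjoint B * mat_adjoint F) * (c \<cdot>\<^sub>m (F * B)) = c \<cdot>\<^sub>m ((mat_adjoint B * mat_adjoint F) * (F * B))"
      by (rule mult_smult_distrib[OF BFc FBc])
    also have "(mat_adjoint B * mat_adjoint F) * (F * B) = mat_adjoint B * ((mat_adjoint F * F) * B)"
      using Bhc Fhc Fc Bc by (simp add: assoc_mult_mat[of _ k k _ n _ k] assoc_mult_mat[of _ k n _ k _ k])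
    also have "\<dots> = 1\<^sub>m k" unfolding FhF1 using Bc BB by simp
    finally show ?thesis using cc1 by (simp add: smult_smult_m)
  qed
  have GGh: "G * mat_adjoint G = complex_of_real (real n / real k) \<cdot>\<^sub>m (F * mat_adjoint F)"
  proof -
    have e0: "G * mat_adjoint G = (c \<cdot>\<^sub>m (F * B)) * (cnj c \<cdot>\<^sub>m (mat_adjoint B * mat_adjoint F))"
      by (simp only: Gh, simp only: GF)
    have "G * mat_adjoint G = c \<cdot>\<^sub>m ((F * B) * (cnj c \<cdot>\<^sub>m (mat_adjoint B * mat_adjoint F)))"
      unfolding e0 by (rule mult_smult_assoc_mat[OF FBc smult_carrier_mat[OF BFc]])
    also have "(F * B) * (cnj c \<cdot>\<^sub>m (mat_adjoint B * mat_adjoint F)) = cnj c \<cdot>\<^sub>m ((F * B) * (mat_adjoint B * mat_adjoint F))"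
      by (rule mult_smult_distrib[OF FBc BFc])
    also have "(F * B) * (mat_adjoint B * mat_adjoint F) = F * ((B * mat_adjoint B) * mat_adjoint F)"
      using Bhc Fhc Fc Bc by (simp add: assoc_mult_mat[of _ n k _ k _ n] assoc_mult_mat[of _ k k _ k _ n])
    also have "\<dots> = F * mat_adjoint F" unfolding BB by (simp add: left_mult_one_mat[OF Fhc])
    finally show ?thesis using cc2 by (simp add: smult_smult_m)
  qed
  define Gk where "Gk = row_sub G k M i0"
  have dG: "dim_row G = n" "dim_col G = k" using Gc by simp_all
  have Gkc: "Gk \<in> carrier_mat k k" unfolding Gk_def row_sub_def dG by simp
  have Gkhc: "mat_adjoint Gk \<in> carrier_mat k k" using Gkc by (rule adj_carrier)
  have rlt: "i0 - 1 + m * M < n" if "m < k" for m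
  proof -
    have "(m + 1) * M \<le> k * M" using that by (intro mult_right_mono) simp_all
    thus ?thesis using assms by (simp add: algebra_simps)
  qed
  have Gk_idx: "Gk $$ (m, j) = G $$ (i0 - 1 + m * M, j)" if "m < k" "j < k" for m j
    unfolding Gk_def row_sub_def using that dG by simp
  have s: "complex_of_real (real n / real k) * (complex_of_real (1 / sqrt (real n)) * complex_of_real (1 / sqrt (real n))) * of_nat k = 1"
    using sqrt_inv_sq[of n] n1 k0 by simp
  have GkGkh: "Gk * mat_adjoint Gk = 1\<^sub>m k"
  proof (rule eq_matI)
    fix m m' assume "m < dim_row (1\<^sub>m k)" "m' < dim_col (1\<^sub>m k)"
    hence m: "m < k" and m': "m' < k" by simp_all
    have "(Gk * mat_adjoint Gk) $$ (m, m') = (\<Sum>j<k. Gk $$ (m, j) * conjugate (Gk $$ (m', j)))"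
      using Gkc m m' by (simp add: scalar_prod_def lessThan_atLeast0)
    also have "\<dots> = (\<Sum>j<k. G $$ (i0 - 1 + m * M, j) * conjugate (G $$ (i0 - 1 + m' * M, j)))"
      using m m' by (intro sum.cong refl) (simp add: Gk_idx)
    also have "\<dots> = (G * mat_adjoint G) $$ (i0 - 1 + m * M, i0 - 1 + m' * M)"
      using Gc rlt[OF m] rlt[OF m'] by (simp add: scalar_prod_def lessThan_atLeast0)
    also have "\<dots> = complex_of_real (real n / real k) * (F * mat_adjoint F) $$ (i0 - 1 + m * M, i0 - 1 + m' * M)"
      unfolding GGh using Fc rlt[OF m] rlt[OF m'] by simp
    also have "\<dots> = complex_of_real (real n / real k) * ((complex_of_real (1 / sqrt (real n)) * complex_of_real (1 / sqrt (real n))) *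
       (if m = m' then of_nat k else 0))"
      unfolding F_def FFh[OF n1 ak kn rlt[OF m] rlt[OF m']] key_sum[OF assms(4) k0 assms(5) ak m m'] ..
    also have "\<dots> = 1\<^sub>m k $$ (m, m')" using m m' s by auto
    finally show "(Gk * mat_adjoint Gk) $$ (m, m') = 1\<^sub>m k $$ (m, m')" .
  qed (use Gkc in simp_all)
  have det1: "det (Gk * mat_adjoint Gk) = 1" unfolding GkGkh by simp
  have GkhGk: "mat_adjoint Gk * Gk = 1\<^sub>m k" by (rule mat_mult_left_right_inverse[OF Gkc Gkhc GkGkh])
  have detGk: "det Gk \<noteq> 0" using det1 det_mult[OF Gkc Gkhc] by auto
  obtain Bi where Bi: "mat_inverse Gk = Some Bi"
  proof (cases "mat_inverse Gk")
    case None
    hence "Gk \<notin> Units (ring_mat TYPE(complex) k undefined)" by (rule mat_inverse(1)[OF Gkc])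
    moreover have "Gk \<in> Units (ring_mat TYPE(complex) k undefined)" by (rule det_non_zero_imp_unit[OF Gkc detGk])
    ultimately show ?thesis by blast
  qed
  from mat_inverse(2)[OF Gkc Bi] have Bi1: "Gk * Bi = 1\<^sub>m k" and Bic: "Bi \<in> carrier_mat k k" by auto
  have BiGkh: "Bi = mat_adjoint Gk"
  proof -
    have "Bi = (mat_adjoint Gk * Gk) * Bi" unfolding GkhGk by (rule left_mult_one_mat[OF Bic, symmetric])
    also have "\<dots> = mat_adjoint Gk * (Gk * Bi)" using Gkhc Gkc Bic by simp
    also have "\<dots> = mat_adjoint Gk" unfolding Bi1 by (rule right_mult_one_mat[OF Gkhc])
    finally show ?thesis .
  qed
  have tight: "tight_frame (G * mat_adjoint Gk)"
    unfolding tight_frame_def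
  proof (intro exI conjI)
    show "0 < real n / real k" using n1 k0 by simp
    have "mat_adjoint (G * mat_adjoint Gk) * (G * mat_adjoint Gk) = (Gk * mat_adjoint G) * (G * mat_adjoint Gk)"
      unfolding adj_mult[OF Gc Gkhc] adj_adj ..
    also have "\<dots> = Gk * ((mat_adjoint G * G) * mat_adjoint Gk)"
      using Gkc Ghc Gc Gkhc by (simp add: assoc_mult_mat[of _ k n _ k _ k] assoc_mult_mat[of _ k k _ n _ k] assoc_mult_mat[of _ n k _ k _ k])
    also have "\<dots> = Gk * (complex_of_real (real n / real k) \<cdot>\<^sub>m mat_adjoint Gk)"
      unfolding GhG mult_smult_assoc_mat[OF one_carrier_mat Gkhc] left_mult_one_mat[OF Gkhc] ..
    also have "\<dots> = complex_of_real (real n / real k) \<cdot>\<^sub>m (Gk * mat_adjoint Gk)"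
      by (rule mult_smult_distrib[OF Gkc Gkhc])
    also have "\<dots> = complex_of_real (real n / real k) \<cdot>\<^sub>m 1\<^sub>m (dim_col (G * mat_adjoint Gk))"
      unfolding GkGkh using carrier_matD[OF Gkc] by simp
    finally show "mat_adjoint (G * mat_adjoint Gk) * (G * mat_adjoint Gk) = complex_of_real (real n / real k) \<cdot>\<^sub>m 1\<^sub>m (dim_col (G * mat_adjoint Gk))" .
  qed
  show ?thesis
    unfolding G_def[symmetric] Gk_def[symmetric] using det1 tight Bi BiGkh by simp
qed

end
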